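(* Let $n\ge3$, $m_1,\dots,m_n>0$, and let the configuration $\theta_i=\pi/2$, $\varphi_i=\varphi_i^0$ ($i=1,\dots,n$) on the equator be a fixed point. Let $\omega\in\mathbb R$, let $X_\omega$ be the point $\theta_i=\pi/2$, $\varphi_i=\varphi_i^0$, $p_{\theta_i}=0$, $p_{\varphi_i}=\omega m_i$, and let $L$ be the Jacobian matrix at $X_\omega$ of the vector field of the rotating system below, with variables ordered as $(\theta_1,\dots,\theta_n,\varphi_1,\dots,\varphi_n,p_{\theta_1},\dots,p_{\theta_n},p_{\varphi_1},\dots,p_{\varphi_n})$. Then $$L=\begin{bmatrix}0&0&M^{-1}&0\\0&0&0&M^{-1}\\H_\omega&0&0&0\\0&G&0&0\end{bmatrix},$$ where $M=\mathrm{diag}(m_1,\dots,m_n)$, $H_\omega=H-\omega^2M$, $H=\big[\frac{\partial^2V}{\partial\theta_i\partial\theta_j}\big]$ and $G=\big[\frac{\partial^2V}{\partial\varphi_i\partial\varphi_j}\big]$ evaluated at the configuration, and these have entries $$H_{ij}=\frac{m_im_j}{\sin^3d_{ij}},\quad H_{ii}=-\sum_{j\neq i}H_{ij}\cos d_{ij},\quad G_{ij}=\frac{-2m_im_j\cos d_{ij}}{\sin^3 d_{ij}},\quad G_{ii}=-\sum_{j\neq i}G_{ij}\qquad(i\neq j).$$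
   Context: Positions on the unit sphere: $\mathbf q_i=(\sin\theta_i\cos\varphi_i,\sin\theta_i\sin\varphi_i,\cos\theta_i)$; $d_{ij}=\arccos(\mathbf q_i\cdot\mathbf q_j)$; the force function is $V=\sum_{i<j}m_im_j\cot d_{ij}$ on $W=\{d_{ij}\notin\{0,\pi\},\ i\ne j\}\subset(\mathbb S^2)^n$, and $U=-V$. A fixed point is a critical point of $V$ on $W$. The rotating system (the $n$-body problem on $\mathbb S^2$ written in coordinates rotating about the $z$-axis with angular velocity $\omega$) is: for $i=1,\dots,n$, $\dot\theta_i=\frac{p_{\theta_i}}{m_i}$, $\dot\varphi_i=\frac{p_{\varphi_i}}{m_i\sin^2\theta_i}-\omega$, $\dot p_{\theta_i}=\frac{p_{\varphi_i}^2\cos\theta_i}{m_i\sin^3\theta_i}-\frac{\partial U}{\partial\theta_i}$, $\dot p_{\varphi_i}=-\frac{\partial U}{\partial\varphi_i}$. The point $X_\omega$ is a rest point of this system (it corresponds to the relative equilibrium obtained by rotating the fixed point uniformly with angular velocity $\omega$). *)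

theory Defs
  imports "HOL-Analysis.Analysis"
begin

text \<open>State vectors are functions nat => real; for n bodies the coordinates are
  theta_i = x i, phi_i = x (n+i), p_theta_i = x (2n+i), p_phi_i = x (3n+i), i < n.\<close>

definition sph_pos :: "real \<Rightarrow> real \<Rightarrow> real \<times> real \<times> real" where
  "sph_pos th ph = (sin th * cos ph, sin th * sin ph, cos th)"

definition dot3 :: "real \<times> real \<times> real \<Rightarrow> real \<times> real \<times> real \<Rightarrow> real" where
  "dot3 u v = fst u * fst v + fst (snd u) * fst (snd v) + snd (snd u) * snd (snd v)"

definition qpos :: "nat \<Rightarrow> (nat \<Rightarrow> real) \<Rightarrow> nat \<Rightarrow> real \<times> real \<times> real" where
  "qpos n x i = sph_pos (x i) (x (n + i))"

definition sdist :: "nat \<Rightarrow> (nat \<Rightarrow> real) \<Rightarrow> nat \<Rightarrow> nat \<Rightarrow> real" where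
  "sdist n x i j = arccos (dot3 (qpos n x i) (qpos n x j))"

definition Vpot :: "nat \<Rightarrow> (nat \<Rightarrow> real) \<Rightarrow> (nat \<Rightarrow> real) \<Rightarrow> real" where
  "Vpot n m x = (\<Sum>(i,j)\<in>{(i,j). i < j \<and> j < n}. m i * m j * cot (sdist n x i j))"

definition Upot :: "nat \<Rightarrow> (nat \<Rightarrow> real) \<Rightarrow> (nat \<Rightarrow> real) \<Rightarrow> real" where
  "Upot n m x = - Vpot n m x"

definition partial :: "((nat \<Rightarrow> real) \<Rightarrow> real) \<Rightarrow> nat \<Rightarrow> (nat \<Rightarrow> real) \<Rightarrow> real" where
  "partial f k x = deriv (\<lambda>t. f (x(k := t))) (x k)"

definition in_W :: "nat \<Rightarrow> (nat \<Rightarrow> real) \<Rightarrow> bool" where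
  "in_W n x \<longleftrightarrow> (\<forall>i<n. \<forall>j<n. i \<noteq> j \<longrightarrow> sdist n x i j \<noteq> 0 \<and> sdist n x i j \<noteq> pi)"

definition fixed_point :: "nat \<Rightarrow> (nat \<Rightarrow> real) \<Rightarrow> (nat \<Rightarrow> real) \<Rightarrow> bool" where
  "fixed_point n m x \<longleftrightarrow> in_W n x \<and>
     (\<forall>k<2*n. ((\<lambda>t. Vpot n m (x(k := t))) has_real_derivative 0) (at (x k)))"

definition config :: "nat \<Rightarrow> (nat \<Rightarrow> real) \<Rightarrow> nat \<Rightarrow> real" where
  "config n phi0 k = (if k < n then pi / 2 else phi0 (k - n))"

definition Xomega :: "nat \<Rightarrow> (nat \<Rightarrow> real) \<Rightarrow> (nat \<Rightarrow> real) \<Rightarrow> real \<Rightarrow> nat \<Rightarrow> real" where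
  "Xomega n m phi0 \<omega> k =
     (if k < n then pi / 2
      else if k < 2*n then phi0 (k - n)
      else if k < 3*n then 0
      else if k < 4*n then \<omega> * m (k - 3*n)
      else 0)"

definition rot_field :: "nat \<Rightarrow> (nat \<Rightarrow> real) \<Rightarrow> real \<Rightarrow> (nat \<Rightarrow> real) \<Rightarrow> nat \<Rightarrow> real" where
  "rot_field n m \<omega> x a =
     (if a < n then x (2*n + a) / m a
      else if a < 2*n then x (3*n + (a - n)) / (m (a - n) * sin (x (a - n)) ^ 2) - \<omega>
      else if a < 3*n then
        x (3*n + (a - 2*n)) ^ 2 * cos (x (a - 2*n)) / (m (a - 2*n) * sin (x (a - 2*n)) ^ 3)
          - partial (Upot n m) (a - 2*n) x
      else if a < 4*n then - partial (Upot n m) (n + (a - 3*n)) x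
      else 0)"

definition Hmat :: "nat \<Rightarrow> (nat \<Rightarrow> real) \<Rightarrow> (nat \<Rightarrow> real) \<Rightarrow> nat \<Rightarrow> nat \<Rightarrow> real" where
  "Hmat n m phi0 i j = partial (partial (Vpot n m) j) i (config n phi0)"

definition Gmat :: "nat \<Rightarrow> (nat \<Rightarrow> real) \<Rightarrow> (nat \<Rightarrow> real) \<Rightarrow> nat \<Rightarrow> nat \<Rightarrow> real" where
  "Gmat n m phi0 i j = partial (partial (Vpot n m) (n + j)) (n + i) (config n phi0)"

definition Lblock :: "nat \<Rightarrow> (nat \<Rightarrow> real) \<Rightarrow> (nat \<Rightarrow> real) \<Rightarrow> real \<Rightarrow> nat \<Rightarrow> nat \<Rightarrow> real" where
  "Lblock n m phi0 \<omega> a b =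
     (if a < n then (if b = 2*n + a then 1 / m a else 0)
      else if a < 2*n then (if b = 3*n + (a - n) then 1 / m (a - n) else 0)
      else if a < 3*n then
        (if b < n then Hmat n m phi0 (a - 2*n) b - (if b = a - 2*n then \<omega>^2 * m b else 0) else 0)
      else (if n \<le> b \<and> b < 2*n then Gmat n m phi0 (a - 3*n) (b - n) else 0))"

end

theory Submission
  imports Defs
begin


definition Cf :: "real \<Rightarrow> real \<Rightarrow> real \<Rightarrow> real \<Rightarrow> real" where
  "Cf a b p q = sin a * sin b * (cos p * cos q + sin p * sin q) + cos a * cos b"
definition Ca :: "real \<Rightarrow> real \<Rightarrow> real \<Rightarrow> real \<Rightarrow> real" where
  "Ca a b p q = cos a * sin b * (cos p * cos q + sin p * sin q) - sin a * cos b"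
definition Cb :: "real \<Rightarrow> real \<Rightarrow> real \<Rightarrow> real \<Rightarrow> real" where
  "Cb a b p q = sin a * cos b * (cos p * cos q + sin p * sin q) - cos a * sin b"
definition Cp :: "real \<Rightarrow> real \<Rightarrow> real \<Rightarrow> real \<Rightarrow> real" where
  "Cp a b p q = sin a * sin b * (- sin p * cos q + cos p * sin q)"
definition Cq :: "real \<Rightarrow> real \<Rightarrow> real \<Rightarrow> real \<Rightarrow> real" where
  "Cq a b p q = sin a * sin b * (- cos p * sin q + sin p * cos q)"

lemma Cf_chain:
  assumes "(fa has_real_derivative da) (at t)" "(fb has_real_derivative db) (at t)"
    "(fp has_real_derivative dp) (at t)" "(fq has_real_derivative dq) (at t)"
  shows "((\<lambda>t. Cf (fa t) (fb t) (fp t) (fq t)) has_real_derivative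
     Ca (fa t) (fb t) (fp t) (fq t) * da + Cb (fa t) (fb t) (fp t) (fq t) * db
     + Cp (fa t) (fb t) (fp t) (fq t) * dp + Cq (fa t) (fb t) (fp t) (fq t) * dq) (at t)"
  unfolding Cf_def Ca_def Cb_def Cp_def Cq_def
  by (rule derivative_eq_intros assms refl)+ (simp add: algebra_simps)

lemma Ca_chain:
  assumes "(fa has_real_derivative da) (at t)" "(fb has_real_derivative db) (at t)"
    "(fp has_real_derivative dp) (at t)" "(fq has_real_derivative dq) (at t)"
    "fa t = pi/2" "fb t = pi/2"
  shows "((\<lambda>t. Ca (fa t) (fb t) (fp t) (fq t)) has_real_derivative
     - Cf (fa t) (fb t) (fp t) (fq t) * da + db) (at t)"
  unfolding Cf_def Ca_def
  by (rule derivative_eq_intros assms refl)+ (simp add: assms algebra_simps)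

lemma Cb_chain:
  assumes "(fa has_real_derivative da) (at t)" "(fb has_real_derivative db) (at t)"
    "(fp has_real_derivative dp) (at t)" "(fq has_real_derivative dq) (at t)"
    "fa t = pi/2" "fb t = pi/2"
  shows "((\<lambda>t. Cb (fa t) (fb t) (fp t) (fq t)) has_real_derivative
     da - Cf (fa t) (fb t) (fp t) (fq t) * db) (at t)"
  unfolding Cf_def Cb_def
  by (rule derivative_eq_intros assms refl)+ (simp add: assms algebra_simps)

lemma Cp_chain:
  assumes "(fa has_real_derivative da) (at t)" "(fb has_real_derivative db) (at t)"
    "(fp has_real_derivative dp) (at t)" "(fq has_real_derivative dq) (at t)"
    "fa t = pi/2" "fb t = pi/2"
  shows "((\<lambda>t. Cp (fa t) (fb t) (fp t) (fq t)) has_real_derivative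
     - Cf (fa t) (fb t) (fp t) (fq t) * dp + Cf (fa t) (fb t) (fp t) (fq t) * dq) (at t)"
  unfolding Cf_def Cp_def
  by (rule derivative_eq_intros assms refl)+ (simp add: assms algebra_simps)

lemma Cq_chain:
  assumes "(fa has_real_derivative da) (at t)" "(fb has_real_derivative db) (at t)"
    "(fp has_real_derivative dp) (at t)" "(fq has_real_derivative dq) (at t)"
    "fa t = pi/2" "fb t = pi/2"
  shows "((\<lambda>t. Cq (fa t) (fb t) (fp t) (fq t)) has_real_derivative
     Cf (fa t) (fb t) (fp t) (fq t) * dp - Cf (fa t) (fb t) (fp t) (fq t) * dq) (at t)"
  unfolding Cf_def Cq_def
  by (rule derivative_eq_intros assms refl)+ (simp add: assms algebra_simps)

lemma Cf_bound: "\<bar>Cf a b p q\<bar> \<le> 1"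
proof -
  have K: "\<bar>cos p * cos q + sin p * sin q\<bar> \<le> 1"
    using cos_diff[of p q] by (metis abs_cos_le_one)
  have "\<bar>Cf a b p q\<bar> \<le> \<bar>sin a * sin b\<bar> * \<bar>cos p * cos q + sin p * sin q\<bar> + \<bar>cos a * cos b\<bar>"
    unfolding Cf_def by (metis abs_mult abs_triangle_ineq)
  also have "\<dots> \<le> \<bar>sin a * sin b\<bar> + \<bar>cos a * cos b\<bar>"
    using K by (simp add: mult_left_le)
  also have "\<dots> \<le> 1"
  proof -
    have "0 \<le> (\<bar>sin a\<bar> - \<bar>sin b\<bar>)^2" by simp
    then have "2*\<bar>sin a\<bar>*\<bar>sin b\<bar> \<le> (sin a)^2 + (sin b)^2" 
      by (simp add: power2_diff power2_abs)
    moreover have "0 \<le> (\<bar>cos a\<bar> - \<bar>cos b\<bar>)^2" by simp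
    then have "2*\<bar>cos a\<bar>*\<bar>cos b\<bar> \<le> (cos a)^2 + (cos b)^2"
      by (simp add: power2_diff power2_abs)
    ultimately show ?thesis using sin_cos_squared_add[of a] sin_cos_squared_add[of b]
      unfolding abs_mult by linarith
  qed
  finally show ?thesis .
qed


definition PP :: "nat \<Rightarrow> (nat \<times> nat) set" where "PP n = {(i,j). i < j \<and> j < n}"
definition cfun :: "nat \<Rightarrow> (nat \<Rightarrow> real) \<Rightarrow> nat \<Rightarrow> nat \<Rightarrow> real" where
  "cfun n y i j = Cf (y i) (y j) (y (n+i)) (y (n+j))"
definition ind :: "bool \<Rightarrow> real" where "ind b = (if b then 1 else 0)"
definition dcf :: "nat \<Rightarrow> (nat \<Rightarrow> real) \<Rightarrow> nat \<Rightarrow> nat \<Rightarrow> nat \<Rightarrow> real" where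
  "dcf n y i j k = Ca (y i) (y j) (y (n+i)) (y (n+j)) * ind (i = k)
     + Cb (y i) (y j) (y (n+i)) (y (n+j)) * ind (j = k)
     + Cp (y i) (y j) (y (n+i)) (y (n+j)) * ind (n+i = k)
     + Cq (y i) (y j) (y (n+i)) (y (n+j)) * ind (n+j = k)"
definition F0 :: "real \<Rightarrow> real" where "F0 c = c / sqrt (1 - c\<^sup>2)"
definition F1 :: "real \<Rightarrow> real" where "F1 c = 1 / sqrt (1 - c\<^sup>2) ^ 3"
definition F2 :: "real \<Rightarrow> real" where "F2 c = 3 * c / sqrt (1 - c\<^sup>2) ^ 5"

lemma finite_PP: "finite (PP n)"
proof -
  have "PP n \<subseteq> {..<n} \<times> {..<n}" unfolding PP_def by auto
  thus ?thesis by (rule finite_subset) auto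
qed

lemma dot_eq: "dot3 (qpos n y i) (qpos n y j) = cfun n y i j"
  unfolding dot3_def qpos_def sph_pos_def cfun_def Cf_def by (simp add: algebra_simps)

lemma cfun_bound: "\<bar>cfun n y i j\<bar> \<le> 1"
  unfolding cfun_def by (rule Cf_bound)

lemma cfun_sym: "cfun n y i j = cfun n y j i"
  unfolding cfun_def Cf_def by (simp add: algebra_simps)

lemma cot_arccos: "\<bar>c\<bar> \<le> 1 \<Longrightarrow> cot (arccos c) = F0 c"
  unfolding cot_def F0_def by (simp add: cos_arccos_abs sin_arccos_abs)

lemma Vpot_eq: "Vpot n m y = (\<Sum>(i,j)\<in>PP n. m i * m j * F0 (cfun n y i j))"
  unfolding Vpot_def PP_def sdist_def dot_eq
  by (rule sum.cong) (auto simp: cot_arccos cfun_bound)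



lemma upd_deriv: "((\<lambda>t. (y(k:=t)) i) has_real_derivative ind (i = k)) (at t)"
  by (cases "i = k") (auto simp: ind_def)

lemma cfun_upd_deriv:
  "((\<lambda>t. cfun n (y(k:=t)) i j) has_real_derivative dcf n (y(k:=t)) i j k) (at t)"
  unfolding cfun_def dcf_def
  by (rule Cf_chain[OF upd_deriv upd_deriv upd_deriv upd_deriv])

lemma S_deriv: "\<bar>c\<bar> < 1 \<Longrightarrow> ((\<lambda>c. sqrt (1 - c\<^sup>2)) has_real_derivative - c / sqrt (1 - c\<^sup>2)) (at c)"
proof -
  assume c: "\<bar>c\<bar> < 1"
  have pos: "0 < 1 - c\<^sup>2" using c by (simp add: abs_square_less_1)
  have d1: "((\<lambda>c. 1 - c\<^sup>2) has_real_derivative -(2*c)) (at c)"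
    by (auto intro!: derivative_eq_intros)
  show ?thesis using DERIV_chain2[OF DERIV_real_sqrt[OF pos] d1]
    by (simp add: field_simps)
qed

lemma F0_deriv: "\<bar>c\<bar> < 1 \<Longrightarrow> (F0 has_real_derivative F1 c) (at c)"
proof -
  assume c: "\<bar>c\<bar> < 1"
  have pos: "0 < 1 - c\<^sup>2" using c by (simp add: abs_square_less_1)
  define S where "S = sqrt (1 - c\<^sup>2)"
  have s: "S ^ 2 = 1 - c\<^sup>2" "S > 0" using pos by (auto simp: S_def)
  have "((\<lambda>c. c / sqrt (1 - c\<^sup>2)) has_real_derivative (1 * S - (- c / S * c)) / S ^ Suc (Suc 0)) (at c)"
    using DERIV_quotient[OF DERIV_ident S_deriv[OF c]] s unfolding S_def by simp
  moreover have "(1 * S - (- c / S * c)) / S ^ Suc (Suc 0) = F1 c"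
    unfolding F1_def S_def[symmetric] using s
    by (simp add: field_simps power3_eq_cube power2_eq_square)
  ultimately show ?thesis unfolding F0_def[abs_def] by simp
qed

lemma F1_deriv: "\<bar>c\<bar> < 1 \<Longrightarrow> (F1 has_real_derivative F2 c) (at c)"
proof -
  assume c: "\<bar>c\<bar> < 1"
  have pos: "0 < 1 - c\<^sup>2" using c by (simp add: abs_square_less_1)
  define S where "S = sqrt (1 - c\<^sup>2)"
  have s: "S ^ 2 = 1 - c\<^sup>2" "S > 0" using pos by (auto simp: S_def)
  have "((\<lambda>c. sqrt (1 - c\<^sup>2) ^ 3) has_real_derivative of_nat 3 * (- c / S * S ^ (3 - Suc 0))) (at c)"
    using DERIV_power[OF S_deriv[OF c], of 3] unfolding S_def by simp
  from DERIV_quotient[OF DERIV_const[where k=1] this] s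
  have "((\<lambda>c. 1 / sqrt (1 - c\<^sup>2) ^ 3) has_real_derivative
     (0 * S^3 - (of_nat 3 * (- c / S * S ^ (3 - Suc 0))) * 1) / (S^3) ^ Suc (Suc 0)) (at c)"
    unfolding S_def by simp
  moreover have "(0 * S^3 - (of_nat 3 * (- c / S * S ^ (3 - Suc 0))) * 1) / (S^3) ^ Suc (Suc 0) = F2 c"
    unfolding F2_def S_def[symmetric] using s
    by (simp add: field_simps eval_nat_numeral)
  ultimately show ?thesis unfolding F1_def[abs_def] by simp
qed

lemma V_deriv:
  assumes "\<forall>(i,j)\<in>PP n. \<bar>cfun n y i j\<bar> < 1"
  shows "((\<lambda>t. Vpot n m (y(k:=t))) has_real_derivative
     (\<Sum>(i,j)\<in>PP n. m i * m j * (F1 (cfun n y i j) * dcf n y i j k))) (at (y k))"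
proof -
  have "((\<lambda>t. case p of (i,j) \<Rightarrow> m i * m j * F0 (cfun n (y(k:=t)) i j)) has_real_derivative
     (case p of (i,j) \<Rightarrow> m i * m j * (F1 (cfun n y i j) * dcf n y i j k))) (at (y k))"
    if "p \<in> PP n" for p
  proof -
    obtain i j where p: "p = (i,j)" by (cases p)
    with that assms have c: "\<bar>cfun n y i j\<bar> < 1" by auto
    have g: "((\<lambda>t. cfun n (y(k:=t)) i j) has_real_derivative dcf n y i j k) (at (y k))"
      using cfun_upd_deriv[of n y k i j "y k"] by simp
    have F: "(F0 has_real_derivative F1 (cfun n y i j)) (at (cfun n (y(k:=y k)) i j))"
      using F0_deriv[OF c] by simp
    show ?thesis unfolding p using DERIV_cmult[OF DERIV_chain2[OF F g], of "m i * m j"] by simp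
  qed
  then have "((\<lambda>t. \<Sum>p\<in>PP n. case p of (i,j) \<Rightarrow> m i * m j * F0 (cfun n (y(k:=t)) i j)) has_real_derivative
     (\<Sum>p\<in>PP n. case p of (i,j) \<Rightarrow> m i * m j * (F1 (cfun n y i j) * dcf n y i j k))) (at (y k))"
    by (rule DERIV_sum)
  then show ?thesis unfolding Vpot_eq by simp
qed

lemma partial_V:
  assumes "\<forall>(i,j)\<in>PP n. \<bar>cfun n y i j\<bar> < 1"
  shows "partial (Vpot n m) k y = (\<Sum>(i,j)\<in>PP n. m i * m j * (F1 (cfun n y i j) * dcf n y i j k))"
  unfolding partial_def by (rule DERIV_imp_deriv[OF V_deriv[OF assms]])

lemma partial_U:
  assumes "\<forall>(i,j)\<in>PP n. \<bar>cfun n y i j\<bar> < 1"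
  shows "partial (Upot n m) k y = - (\<Sum>(i,j)\<in>PP n. m i * m j * (F1 (cfun n y i j) * dcf n y i j k))"
  unfolding partial_def Upot_def by (rule DERIV_imp_deriv[OF DERIV_minus[OF V_deriv[OF assms]]])

lemma PP_Sigma: "PP n = Sigma {..<n} (\<lambda>i. {i<..<n})"
  unfolding PP_def by auto

lemma PP_sum: "(\<Sum>(i,j)\<in>PP n. f i j) = (\<Sum>i<n. \<Sum>j\<in>{i<..<n}. f i j)"
  unfolding PP_Sigma by (rule sum.Sigma[symmetric]) auto

lemma LA:
  assumes "k < n" "b < n" "k \<noteq> b" "\<And>i j. g i j = g j i"
  shows "(\<Sum>(i,j)\<in>PP n. g i j * (ind (i = k) * ind (j = b) + ind (j = k) * ind (i = b))) = g k b"
proof -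
  have "(\<Sum>(i,j)\<in>PP n. g i j * (ind (i = k) * ind (j = b) + ind (j = k) * ind (i = b)))
      = (\<Sum>p\<in>PP n. if p = (min k b, max k b) then g k b else 0)"
  proof (rule sum.cong[OF refl])
    fix p assume "p \<in> PP n"
    then obtain i j where p: "p = (i,j)" "i < j" by (auto simp: PP_def)
    show "(case p of (i,j) \<Rightarrow> g i j * (ind (i = k) * ind (j = b) + ind (j = k) * ind (i = b)))
       = (if p = (min k b, max k b) then g k b else 0)"
      using p assms(3) assms(4)[of k b] by (auto simp: ind_def min_def max_def)
  qed
  also have "\<dots> = g k b"
  proof -
    have "(min k b, max k b) \<in> PP n" using assms(1-3) by (auto simp: PP_def min_def max_def)
    then show ?thesis using sum.delta[OF finite_PP, of "(min k b, max k b)" "\<lambda>_. g k b" n] by simp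
  qed
  finally show ?thesis .
qed

lemma LB:
  assumes "k < n" "\<And>i j. g i j = g j i"
  shows "(\<Sum>(i,j)\<in>PP n. g i j * (ind (i = k) + ind (j = k))) = (\<Sum>j\<in>{j. j < n \<and> j \<noteq> k}. g k j)"
proof -
  have "(\<Sum>(i,j)\<in>PP n. g i j * (ind (i = k) + ind (j = k)))
     = (\<Sum>i<n. \<Sum>j\<in>{i<..<n}. g i j * ind (i = k)) + (\<Sum>i<n. \<Sum>j\<in>{i<..<n}. g i j * ind (j = k))"
    unfolding PP_sum by (simp add: distrib_left sum.distrib)
  also have "(\<Sum>i<n. \<Sum>j\<in>{i<..<n}. g i j * ind (i = k)) = (\<Sum>j\<in>{k<..<n}. g k j)"
  proof -
    have "(\<Sum>i<n. \<Sum>j\<in>{i<..<n}. g i j * ind (i = k)) = (\<Sum>i<n. if i = k then (\<Sum>j\<in>{k<..<n}. g k j) else 0)"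
      by (rule sum.cong) (auto simp: ind_def)
    also have "\<dots> = (\<Sum>j\<in>{k<..<n}. g k j)" using assms(1) by simp
    finally show ?thesis .
  qed
  also have "(\<Sum>i<n. \<Sum>j\<in>{i<..<n}. g i j * ind (j = k)) = (\<Sum>i<k. g k i)"
  proof -
    have "(\<Sum>i<n. \<Sum>j\<in>{i<..<n}. g i j * ind (j = k)) = (\<Sum>i<n. if i < k then g k i else 0)"
    proof (rule sum.cong[OF refl])
      fix i assume i: "i \<in> {..<n}"
      have "(\<Sum>j\<in>{i<..<n}. g i j * ind (j = k)) = (\<Sum>j\<in>{i<..<n}. if j = k then g i k else 0)"
        by (rule sum.cong) (auto simp: ind_def)
      also have "\<dots> = (if i < k then g k i else 0)" using assms(1) i assms(2)[of i k] by simp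
      finally show "(\<Sum>j\<in>{i<..<n}. g i j * ind (j = k)) = (if i < k then g k i else 0)" .
    qed
    also have "\<dots> = (\<Sum>i\<in>{i\<in>{..<n}. i < k}. g k i)" by (rule sum.inter_filter[symmetric]) simp
    also have "{i\<in>{..<n}. i < k} = {..<k}" using assms(1) by auto
    finally show ?thesis by simp
  qed
  also have "(\<Sum>j\<in>{k<..<n}. g k j) + (\<Sum>i<k. g k i) = (\<Sum>j\<in>{j. j < n \<and> j \<noteq> k}. g k j)"
  proof -
    have e: "{j. j < n \<and> j \<noteq> k} = {k<..<n} \<union> {..<k}" using assms(1) by auto
    show ?thesis unfolding e by (subst sum.union_disjoint) auto
  qed
  finally show ?thesis .
qed

lemma ev_near:
  assumes "\<forall>(i,j)\<in>PP n. \<bar>cfun n x i j\<bar> < 1"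
  shows "eventually (\<lambda>t. \<forall>(i,j)\<in>PP n. \<bar>cfun n (x(b:=t)) i j\<bar> < 1) (nhds (x b))"
proof -
  have "eventually (\<lambda>t. \<bar>cfun n (x(b:=t)) i j\<bar> < 1) (nhds (x b))" if "(i,j)\<in>PP n" for i j
  proof -
    let ?g = "\<lambda>t. cfun n (x(b:=t)) i j"
    have cont: "continuous_on UNIV ?g"
      by (rule continuous_at_imp_continuous_on) (auto intro: DERIV_isCont[OF cfun_upd_deriv])
    have "open {t. -1 < ?g t \<and> ?g t < 1}"
      by (intro open_Collect_conj open_Collect_less cont continuous_on_const)
    moreover have "x b \<in> {t. -1 < ?g t \<and> ?g t < 1}" using assms that by (auto simp: abs_less_iff)
    ultimately have "eventually (\<lambda>t. t \<in> {t. -1 < ?g t \<and> ?g t < 1}) (nhds (x b))"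
      by (rule eventually_nhds_in_open)
    then show ?thesis by eventually_elim (simp add: abs_less_iff)
  qed
  then show ?thesis by (intro eventually_ball_finite finite_PP) auto
qed

definition ddc :: "nat \<Rightarrow> (nat \<Rightarrow> real) \<Rightarrow> nat \<Rightarrow> nat \<Rightarrow> nat \<Rightarrow> nat \<Rightarrow> real" where
  "ddc n x i j k b = ind (i = k) * (- cfun n x i j * ind (i = b) + ind (j = b))
     + ind (j = k) * (ind (i = b) - cfun n x i j * ind (j = b))
     + ind (n+i = k) * (- cfun n x i j * ind (n+i = b) + cfun n x i j * ind (n+j = b))
     + ind (n+j = k) * (cfun n x i j * ind (n+i = b) - cfun n x i j * ind (n+j = b))"

lemma dcf_deriv2:
  assumes "i < n" "j < n" "\<forall>l<n. x l = pi/2"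
  shows "((\<lambda>t. dcf n (x(b:=t)) i j k) has_real_derivative ddc n x i j k b) (at (x b))"
proof -
  have h: "(x(b:=x b)) i = pi/2" "(x(b:=x b)) j = pi/2" using assms by auto
  note U = upd_deriv[of x b _ "x b"]
  have a: "((\<lambda>t. Ca ((x(b:=t)) i) ((x(b:=t)) j) ((x(b:=t)) (n+i)) ((x(b:=t)) (n+j))) has_real_derivative
     - cfun n x i j * ind (i = b) + ind (j = b)) (at (x b))"
    using Ca_chain[OF U U U U h] by (simp add: cfun_def)
  have bb: "((\<lambda>t. Cb ((x(b:=t)) i) ((x(b:=t)) j) ((x(b:=t)) (n+i)) ((x(b:=t)) (n+j))) has_real_derivative
     ind (i = b) - cfun n x i j * ind (j = b)) (at (x b))"
    using Cb_chain[OF U U U U h] by (simp add: cfun_def)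
  have p: "((\<lambda>t. Cp ((x(b:=t)) i) ((x(b:=t)) j) ((x(b:=t)) (n+i)) ((x(b:=t)) (n+j))) has_real_derivative
     - cfun n x i j * ind (n+i = b) + cfun n x i j * ind (n+j = b)) (at (x b))"
    using Cp_chain[OF U U U U h] by (simp add: cfun_def)
  have q: "((\<lambda>t. Cq ((x(b:=t)) i) ((x(b:=t)) j) ((x(b:=t)) (n+i)) ((x(b:=t)) (n+j))) has_real_derivative
     cfun n x i j * ind (n+i = b) - cfun n x i j * ind (n+j = b)) (at (x b))"
    using Cq_chain[OF U U U U h] by (simp add: cfun_def)
  show ?thesis unfolding dcf_def ddc_def
    by (rule DERIV_cong[OF DERIV_add[OF DERIV_add[OF DERIV_add[OF
        DERIV_cmult_right[OF a] DERIV_cmult_right[OF bb]] DERIV_cmult_right[OF p]] DERIV_cmult_right[OF q]]])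
       (simp add: algebra_simps)
qed

lemma E_raw:
  fixes m :: "nat \<Rightarrow> real" and k b :: nat
  assumes eq: "\<forall>l<n. x l = pi/2" and W: "\<forall>(i,j)\<in>PP n. \<bar>cfun n x i j\<bar> < 1"
  defines "R \<equiv> (\<Sum>(i,j)\<in>PP n. m i * m j * (F2 (cfun n x i j) * dcf n x i j b * dcf n x i j k
                     + ddc n x i j k b * F1 (cfun n x i j)))"
  shows "((\<lambda>t. partial (Vpot n m) k (x(b:=t))) has_real_derivative R) (at (x b))"
    and "((\<lambda>t. - partial (Upot n m) k (x(b:=t))) has_real_derivative R) (at (x b))"
proof -
  let ?f = "\<lambda>t. (\<Sum>(i,j)\<in>PP n. m i * m j * (F1 (cfun n (x(b:=t)) i j) * dcf n (x(b:=t)) i j k))"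
  have D: "(?f has_real_derivative R) (at (x b))"
  proof -
    have "((\<lambda>t. case p of (i,j) \<Rightarrow> m i * m j * (F1 (cfun n (x(b:=t)) i j) * dcf n (x(b:=t)) i j k))
       has_real_derivative (case p of (i,j) \<Rightarrow> m i * m j * (F2 (cfun n x i j) * dcf n x i j b * dcf n x i j k
                     + ddc n x i j k b * F1 (cfun n x i j)))) (at (x b))" if "p \<in> PP n" for p
    proof -
      obtain i j where pij: "p = (i,j)" by (cases p)
      with that W have c: "\<bar>cfun n x i j\<bar> < 1" and ij: "i < n" "j < n" by (auto simp: PP_def)
      have g: "((\<lambda>t. cfun n (x(b:=t)) i j) has_real_derivative dcf n x i j b) (at (x b))"
        using cfun_upd_deriv[of n x b i j "x b"] by simp
      have F: "(F1 has_real_derivative F2 (cfun n x i j)) (at (cfun n (x(b:=x b)) i j))"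
        using F1_deriv[OF c] by simp
      note d2 = DERIV_mult[OF DERIV_chain2[OF F g] dcf_deriv2[OF ij eq, of b k]]
      show ?thesis unfolding pij using DERIV_cmult[OF d2, of "m i * m j"] by (simp add: algebra_simps)
    qed
    then have "((\<lambda>t. \<Sum>p\<in>PP n. case p of (i,j) \<Rightarrow> m i * m j * (F1 (cfun n (x(b:=t)) i j) * dcf n (x(b:=t)) i j k))
       has_real_derivative (\<Sum>p\<in>PP n. case p of (i,j) \<Rightarrow> m i * m j * (F2 (cfun n x i j) * dcf n x i j b * dcf n x i j k
                     + ddc n x i j k b * F1 (cfun n x i j)))) (at (x b))"
      by (rule DERIV_sum)
    then show ?thesis unfolding R_def by simp
  qed
  have ev: "eventually (\<lambda>t. \<forall>(i,j)\<in>PP n. \<bar>cfun n (x(b:=t)) i j\<bar> < 1) (nhds (x b))"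
    by (rule ev_near[OF W])
  have e1: "eventually (\<lambda>t. partial (Vpot n m) k (x(b:=t)) = ?f t) (nhds (x b))"
    using ev by eventually_elim (rule partial_V)
  have e2: "eventually (\<lambda>t. - partial (Upot n m) k (x(b:=t)) = ?f t) (nhds (x b))"
    using ev by eventually_elim (simp add: partial_U)
  show "((\<lambda>t. partial (Vpot n m) k (x(b:=t))) has_real_derivative R) (at (x b))"
    using DERIV_cong_ev[OF refl e1 refl] D by simp
  show "((\<lambda>t. - partial (Upot n m) k (x(b:=t))) has_real_derivative R) (at (x b))"
    using DERIV_cong_ev[OF refl e2 refl] D by simp
qed

definition sv :: "nat \<Rightarrow> (nat \<Rightarrow> real) \<Rightarrow> nat \<Rightarrow> nat \<Rightarrow> real" where
  "sv n x i j = sin (x (n+i)) * cos (x (n+j)) - cos (x (n+i)) * sin (x (n+j))"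

lemma ind_simps [simp]: "ind True = 1" "ind False = 0" by (auto simp: ind_def)

lemma dcf_eq:
  assumes "i < n" "j < n" "\<forall>l<n. x l = pi/2"
  shows "dcf n x i j k = (ind (n+j = k) - ind (n+i = k)) * sv n x i j"
proof -
  have h: "x i = pi/2" "x j = pi/2" using assms by auto
  show ?thesis unfolding dcf_def Ca_def Cb_def Cp_def Cq_def sv_def h by (simp add: algebra_simps)
qed

lemma cfun_eq:
  assumes "i < n" "j < n" "\<forall>l<n. x l = pi/2"
  shows "cfun n x i j = cos (x (n+i) - x (n+j))"
proof -
  have h: "x i = pi/2" "x j = pi/2" using assms by auto
  show ?thesis unfolding cfun_def Cf_def h by (simp add: cos_diff)
qed

lemma sv_sq:
  assumes "i < n" "j < n" "\<forall>l<n. x l = pi/2"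
  shows "sv n x i j ^ 2 = 1 - cfun n x i j ^ 2"
proof -
  have "sv n x i j = sin (x (n+i) - x (n+j))" unfolding sv_def by (simp add: sin_diff)
  then show ?thesis using cfun_eq[OF assms] by (simp add: sin_squared_eq)
qed

lemma F2_id: "\<bar>c\<bar> < 1 \<Longrightarrow> F2 c * (1 - c\<^sup>2) = 3 * c * F1 c"
proof -
  assume c: "\<bar>c\<bar> < 1"
  have pos: "0 < 1 - c\<^sup>2" using c by (simp add: abs_square_less_1)
  define S where "S = sqrt (1 - c\<^sup>2)"
  have s: "1 - c\<^sup>2 = S ^ 2" "S > 0" using pos by (auto simp: S_def)
  show ?thesis unfolding F2_def F1_def S_def[symmetric] s(1) using s(2)
    by (simp add: field_simps eval_nat_numeral)
qed

lemma ind_theta: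
  assumes "i \<noteq> j"
  shows "ind (i = k) * (- c * ind (i = b) + ind (j = b)) + ind (j = k) * (ind (i = b) - c * ind (j = b))
    = (if k = b then - c * (ind (i = k) + ind (j = k)) else ind (i = k) * ind (j = b) + ind (j = k) * ind (i = b))"
  using assms by (auto simp: ind_def)

lemma ind_prod:
  assumes "i \<noteq> j"
  shows "(ind (i = b) - ind (j = b)) * (ind (i = k) - ind (j = k))
    = (if k = b then ind (i = k) + ind (j = k) else - (ind (i = k) * ind (j = b) + ind (j = k) * ind (i = b)))"
  using assms by (auto simp: ind_def)

definition Ev :: "nat \<Rightarrow> (nat \<Rightarrow> real) \<Rightarrow> (nat \<Rightarrow> real) \<Rightarrow> nat \<Rightarrow> nat \<Rightarrow> real" where
  "Ev n m x k b =
    (if k < n \<and> b < n then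
       (if k = b then - (\<Sum>j\<in>{j. j < n \<and> j \<noteq> k}. m k * m j * F1 (cfun n x k j) * cfun n x k j)
        else m k * m b * F1 (cfun n x k b))
     else if n \<le> k \<and> k < 2*n \<and> n \<le> b \<and> b < 2*n then
       (if k = b then (\<Sum>j\<in>{j. j < n \<and> j \<noteq> k - n}. 2 * m (k-n) * m j * cfun n x (k-n) j * F1 (cfun n x (k-n) j))
        else - (2 * m (k-n) * m (b-n) * cfun n x (k-n) (b-n) * F1 (cfun n x (k-n) (b-n))))
     else 0)"

lemma E_sum:
  fixes m :: "nat \<Rightarrow> real" and k b :: nat
  assumes eq: "\<forall>l<n. x l = pi/2" and W: "\<forall>(i,j)\<in>PP n. \<bar>cfun n x i j\<bar> < 1" and k: "k < 2*n"
  shows "(\<Sum>(i,j)\<in>PP n. m i * m j * (F2 (cfun n x i j) * dcf n x i j b * dcf n x i j k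
                     + ddc n x i j k b * F1 (cfun n x i j))) = Ev n m x k b"
proof (cases "k < n")
  case kn: True
  have pw: "m i * m j * (F2 (cfun n x i j) * dcf n x i j b * dcf n x i j k + ddc n x i j k b * F1 (cfun n x i j))
     = m i * m j * F1 (cfun n x i j) * (if k = b then - cfun n x i j * (ind (i = k) + ind (j = k))
          else ind (i = k) * ind (j = b) + ind (j = k) * ind (i = b))"
    if "(i,j) \<in> PP n" for i j
  proof -
    from that have ij: "i < j" "j < n" by (auto simp: PP_def)
    have f: "(n + i = k) \<longleftrightarrow> False" "(n + j = k) \<longleftrightarrow> False" using kn by auto
    have "dcf n x i j k = 0" using dcf_eq[of i n j x k] ij eq f by simp
    moreover have "ddc n x i j k b = (if k = b then - cfun n x i j * (ind (i = k) + ind (j = k))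
          else ind (i = k) * ind (j = b) + ind (j = k) * ind (i = b))"
      unfolding ddc_def f using ind_theta[of i j k "cfun n x i j" b] ij by simp
    ultimately show ?thesis by (simp add: algebra_simps)
  qed
  show ?thesis
  proof (cases "b < n")
    case bn: True
    show ?thesis
    proof (cases "k = b")
      case True
      have "(\<Sum>(i,j)\<in>PP n. m i * m j * (F2 (cfun n x i j) * dcf n x i j b * dcf n x i j k
                     + ddc n x i j k b * F1 (cfun n x i j)))
         = (\<Sum>(i,j)\<in>PP n. (- (m i * m j * F1 (cfun n x i j) * cfun n x i j)) * (ind (i = k) + ind (j = k)))"
        apply (rule sum.cong[OF refl])
        apply clarify
        apply (subst pw, assumption)
        apply (simp add: True)
        done
      also have "\<dots> = (\<Sum>j\<in>{j. j < n \<and> j \<noteq> k}. - (m k * m j * F1 (cfun n x k j) * cfun n x k j))"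
        by (rule LB[OF kn]) (simp add: cfun_sym mult.commute)
      finally show ?thesis using kn bn True by (simp add: Ev_def sum_negf)
    next
      case False
      have "(\<Sum>(i,j)\<in>PP n. m i * m j * (F2 (cfun n x i j) * dcf n x i j b * dcf n x i j k
                     + ddc n x i j k b * F1 (cfun n x i j)))
         = (\<Sum>(i,j)\<in>PP n. (m i * m j * F1 (cfun n x i j)) * (ind (i = k) * ind (j = b) + ind (j = k) * ind (i = b)))"
        by (rule sum.cong[OF refl]) (auto simp: pw False)
      also have "\<dots> = m k * m b * F1 (cfun n x k b)"
        by (rule LA[OF kn bn False]) (simp add: cfun_sym mult.commute)
      finally show ?thesis using kn bn False by (simp add: Ev_def)
    qed
  next
    case bn: False
    have "(\<Sum>(i,j)\<in>PP n. m i * m j * (F2 (cfun n x i j) * dcf n x i j b * dcf n x i j k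
                     + ddc n x i j k b * F1 (cfun n x i j))) = (\<Sum>(i,j)\<in>PP n. 0)"
    proof (rule sum.cong[OF refl])
      fix p assume "p \<in> PP n"
      then obtain i j where p: "p = (i,j)" "i < j" "j < n" "(i,j) \<in> PP n" by (auto simp: PP_def)
      have f: "(i = b) \<longleftrightarrow> False" "(j = b) \<longleftrightarrow> False" "(k = b) \<longleftrightarrow> False" using bn kn p by auto
      show "(case p of (i,j) \<Rightarrow> m i * m j * (F2 (cfun n x i j) * dcf n x i j b * dcf n x i j k
                     + ddc n x i j k b * F1 (cfun n x i j))) = (case p of (i,j) \<Rightarrow> 0)"
        using pw[OF p(4)] p(1) f by simp
    qed
    then show ?thesis using kn bn by (simp add: Ev_def)
  qed
next
  case kn: False
  then obtain \<kappa> where kk: "k = n + \<kappa>" "\<kappa> < n" using k by (metis add_diff_inverse_nat add_less_cancel_left mult_2)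
  have pw: "m i * m j * (F2 (cfun n x i j) * dcf n x i j b * dcf n x i j k + ddc n x i j k b * F1 (cfun n x i j))
     = 2 * m i * m j * cfun n x i j * F1 (cfun n x i j) * ((ind (n+i = b) - ind (n+j = b)) * (ind (i = \<kappa>) - ind (j = \<kappa>)))"
    if "(i,j) \<in> PP n" for i j
  proof -
    from that have ij: "i < j" "j < n" by (auto simp: PP_def)
    have c: "\<bar>cfun n x i j\<bar> < 1" using W that by auto
    have f: "(i = k) \<longleftrightarrow> False" "(j = k) \<longleftrightarrow> False" using kk ij by auto
    have d: "dcf n x i j b * dcf n x i j k = (1 - cfun n x i j ^ 2) *
        ((ind (n+i = b) - ind (n+j = b)) * (ind (i = \<kappa>) - ind (j = \<kappa>)))"
    proof -
      have e1: "dcf n x i j k = (ind (j = \<kappa>) - ind (i = \<kappa>)) * sv n x i j"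
        using dcf_eq[of i n j x k] ij eq kk by simp
      have e2: "dcf n x i j b = (ind (n+j = b) - ind (n+i = b)) * sv n x i j"
        using dcf_eq[of i n j x b] ij eq by simp
      have e3: "sv n x i j ^ 2 = 1 - cfun n x i j ^ 2" using sv_sq[of i n j x] ij eq by simp
      show ?thesis unfolding e1 e2 e3[symmetric] by (simp add: power2_eq_square algebra_simps)
    qed
    have dd: "ddc n x i j k b = - cfun n x i j * ((ind (n+i = b) - ind (n+j = b)) * (ind (i = \<kappa>) - ind (j = \<kappa>)))"
    proof -
      have f2: "i \<noteq> n+\<kappa>" "j \<noteq> n+\<kappa>" "i \<noteq> \<kappa>+n" "j \<noteq> \<kappa>+n" using ij kk by auto
      show ?thesis by (simp add: ddc_def kk f2 algebra_simps)
    qed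
    have h: "F2 (cfun n x i j) * dcf n x i j b * dcf n x i j k = 3 * cfun n x i j * F1 (cfun n x i j) *
        ((ind (n+i = b) - ind (n+j = b)) * (ind (i = \<kappa>) - ind (j = \<kappa>)))"
    proof -
      have "F2 (cfun n x i j) * dcf n x i j b * dcf n x i j k = F2 (cfun n x i j) * (dcf n x i j b * dcf n x i j k)"
        by (simp only: mult.assoc)
      also have "\<dots> = (F2 (cfun n x i j) * (1 - cfun n x i j ^ 2)) *
        ((ind (n+i = b) - ind (n+j = b)) * (ind (i = \<kappa>) - ind (j = \<kappa>)))"
        unfolding d by (simp only: mult.assoc)
      also have "\<dots> = 3 * cfun n x i j * F1 (cfun n x i j) *
        ((ind (n+i = b) - ind (n+j = b)) * (ind (i = \<kappa>) - ind (j = \<kappa>)))"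
        unfolding F2_id[OF c] ..
      finally show ?thesis .
    qed
    show ?thesis unfolding dd h by (simp add: algebra_simps)
  qed
  show ?thesis
  proof (cases "n \<le> b \<and> b < 2*n")
    case bn: True
    then obtain \<beta> where bb: "b = n + \<beta>" "\<beta> < n" by (metis add_diff_inverse_nat add_less_cancel_left mult_2 not_less)
    let ?g = "\<lambda>i j. 2 * m i * m j * cfun n x i j * F1 (cfun n x i j)"
    have gs: "\<And>i j. ?g i j = ?g j i" by (simp add: cfun_sym mult.commute mult.left_commute)
    have pw2: "m i * m j * (F2 (cfun n x i j) * dcf n x i j b * dcf n x i j k + ddc n x i j k b * F1 (cfun n x i j))
       = ?g i j * (if \<kappa> = \<beta> then ind (i = \<kappa>) + ind (j = \<kappa>) else - (ind (i = \<kappa>) * ind (j = \<beta>) + ind (j = \<kappa>) * ind (i = \<beta>)))"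
      if "(i,j) \<in> PP n" for i j
      using pw[OF that] ind_prod[of i j \<beta> \<kappa>] that unfolding bb by (auto simp: PP_def)
    show ?thesis
    proof (cases "\<kappa> = \<beta>")
      case True
      have "(\<Sum>(i,j)\<in>PP n. m i * m j * (F2 (cfun n x i j) * dcf n x i j b * dcf n x i j k
                     + ddc n x i j k b * F1 (cfun n x i j))) = (\<Sum>(i,j)\<in>PP n. ?g i j * (ind (i = \<kappa>) + ind (j = \<kappa>)))"
        by (rule sum.cong[OF refl]) (auto simp: pw2 True)
      also have "\<dots> = (\<Sum>j\<in>{j. j < n \<and> j \<noteq> \<kappa>}. ?g \<kappa> j)" by (rule LB[OF kk(2) gs])
      finally show ?thesis using kk bb True by (simp add: Ev_def)
    next
      case False
      have "(\<Sum>(i,j)\<in>PP n. m i * m j * (F2 (cfun n x i j) * dcf n x i j b * dcf n x i j k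
                     + ddc n x i j k b * F1 (cfun n x i j)))
         = (\<Sum>(i,j)\<in>PP n. (- ?g i j) * (ind (i = \<kappa>) * ind (j = \<beta>) + ind (j = \<kappa>) * ind (i = \<beta>)))"
        apply (rule sum.cong[OF refl])
        apply clarify
        apply (subst pw2, assumption)
        apply (simp add: False algebra_simps)
        done
      also have "\<dots> = - ?g \<kappa> \<beta>" by (rule LA[OF kk(2) bb(2) False]) (use gs in simp)
      finally show ?thesis using kk bb False by (simp add: Ev_def)
    qed
  next
    case bn: False
    have "(\<Sum>(i,j)\<in>PP n. m i * m j * (F2 (cfun n x i j) * dcf n x i j b * dcf n x i j k
                     + ddc n x i j k b * F1 (cfun n x i j))) = (\<Sum>(i,j)\<in>PP n. 0)"
    proof (rule sum.cong[OF refl])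
      fix p assume "p \<in> PP n"
      then obtain i j where p: "p = (i,j)" "i < j" "j < n" "(i,j) \<in> PP n" by (auto simp: PP_def)
      have f: "(n + i = b) \<longleftrightarrow> False" "(n + j = b) \<longleftrightarrow> False" using bn p by auto
      show "(case p of (i,j) \<Rightarrow> m i * m j * (F2 (cfun n x i j) * dcf n x i j b * dcf n x i j k
                     + ddc n x i j k b * F1 (cfun n x i j))) = (case p of (i,j) \<Rightarrow> 0)"
        using pw[OF p(4)] p(1) f by simp
    qed
    moreover have "Ev n m x k b = 0" using kn bn unfolding Ev_def by auto
    ultimately show ?thesis by simp
  qed
qed

lemma X_th: "l < n \<Longrightarrow> Xomega n m ph \<omega> l = pi/2" by (simp add: Xomega_def)
lemma X_ph: "i < n \<Longrightarrow> Xomega n m ph \<omega> (n+i) = ph i" by (simp add: Xomega_def)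
lemma X_pt: "i < n \<Longrightarrow> Xomega n m ph \<omega> (2*n+i) = 0" by (simp add: Xomega_def)
lemma X_pp: "i < n \<Longrightarrow> Xomega n m ph \<omega> (3*n+i) = \<omega> * m i" by (simp add: Xomega_def)
lemma C_th: "l < n \<Longrightarrow> config n ph l = pi/2" by (simp add: config_def)
lemma C_ph: "i < n \<Longrightarrow> config n ph (n+i) = ph i" by (simp add: config_def)

lemma cfun_XC: "i < n \<Longrightarrow> j < n \<Longrightarrow> cfun n (Xomega n m ph \<omega>) i j = cfun n (config n ph) i j"
  by (simp add: cfun_def X_th X_ph C_th C_ph)

lemma Ev_XC: "Ev n m (Xomega n m ph \<omega>) k b = Ev n m (config n ph) k b"
  unfolding Ev_def by (auto simp: cfun_XC intro!: sum.cong)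

lemma Ev_sym: "Ev n m x k b = Ev n m x b k"
  unfolding Ev_def by (auto simp: cfun_sym mult.commute mult.left_commute)

lemma W_of_inW:
  assumes "in_W n x"
  shows "\<forall>(i,j)\<in>PP n. \<bar>cfun n x i j\<bar> < 1"
proof (clarify)
  fix i j assume "(i,j) \<in> PP n"
  then have ij: "i < n" "j < n" "i \<noteq> j" by (auto simp: PP_def)
  have s: "sdist n x i j = arccos (cfun n x i j)" unfolding sdist_def dot_eq ..
  from assms ij have "sdist n x i j \<noteq> 0" "sdist n x i j \<noteq> pi" unfolding in_W_def by auto
  then have "cfun n x i j \<noteq> 1" "cfun n x i j \<noteq> -1" unfolding s by auto
  then show "\<bar>cfun n x i j\<bar> < 1" using cfun_bound[of n x i j] by auto
qed

lemma row1:
  assumes "a < n"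
  shows "((\<lambda>t. ((Xomega n m ph \<omega>)(b:=t)) (2*n+a) / m a) has_real_derivative
     (if b = 2*n + a then 1 / m a else 0)) (at (Xomega n m ph \<omega> b))"
  using DERIV_cdivide[OF upd_deriv[of "Xomega n m ph \<omega>" b "2*n+a" "Xomega n m ph \<omega> b"], of "m a"]
  by (auto simp: ind_def)

lemma row2:
  assumes "i < n" "m i > 0"
  shows "((\<lambda>t. ((Xomega n m ph \<omega>)(b:=t)) (3*n+i) / (m i * sin (((Xomega n m ph \<omega>)(b:=t)) i) ^ 2) - \<omega>)
     has_real_derivative (if b = 3*n + i then 1 / m i else 0)) (at (Xomega n m ph \<omega> b))"
proof (cases "b = i")
  case True
  have ne: "3*n+i \<noteq> i" using assms by auto
  have f: "(\<lambda>t. ((Xomega n m ph \<omega>)(b:=t)) (3*n+i) / (m i * sin (((Xomega n m ph \<omega>)(b:=t)) i) ^ 2) - \<omega>)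
     = (\<lambda>t. (\<omega> * m i) / (m i * sin t ^ 2) - \<omega>)" using True ne assms by (auto simp: X_pp)
  have xb: "Xomega n m ph \<omega> b = pi/2" using True assms by (simp add: X_th)
  have "((\<lambda>t. (\<omega> * m i) / (m i * sin t ^ 2) - \<omega>) has_real_derivative 0) (at (pi/2))"
    using assms by (auto intro!: derivative_eq_intros)
  then show ?thesis unfolding f xb using True ne by simp
next
  case False
  have f: "(\<lambda>t. ((Xomega n m ph \<omega>)(b:=t)) (3*n+i) / (m i * sin (((Xomega n m ph \<omega>)(b:=t)) i) ^ 2) - \<omega>)
     = (\<lambda>t. ((Xomega n m ph \<omega>)(b:=t)) (3*n+i) / m i - \<omega>)" using False assms by (auto simp: X_th)
  show ?thesis unfolding f
    using DERIV_diff[OF DERIV_cdivide[OF upd_deriv[of "Xomega n m ph \<omega>" b "3*n+i" "Xomega n m ph \<omega> b"], of "m i"]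
        DERIV_const[of \<omega>]]
    by (auto simp: ind_def)
qed

lemma row3:
  assumes "i < n" "m i > 0"
  shows "((\<lambda>t. ((Xomega n m ph \<omega>)(b:=t)) (3*n+i) ^ 2 * cos (((Xomega n m ph \<omega>)(b:=t)) i)
        / (m i * sin (((Xomega n m ph \<omega>)(b:=t)) i) ^ 3))
     has_real_derivative (if b = i then - (\<omega>^2 * m i) else 0)) (at (Xomega n m ph \<omega> b))"
proof (cases "b = i")
  case True
  have ne: "3*n+i \<noteq> i" using assms by auto
  have f: "(\<lambda>t. ((Xomega n m ph \<omega>)(b:=t)) (3*n+i) ^ 2 * cos (((Xomega n m ph \<omega>)(b:=t)) i)
        / (m i * sin (((Xomega n m ph \<omega>)(b:=t)) i) ^ 3))
     = (\<lambda>t. (\<omega> * m i) ^ 2 * cos t / (m i * sin t ^ 3))" using True ne assms by (auto simp: X_pp)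
  have xb: "Xomega n m ph \<omega> b = pi/2" using True assms by (simp add: X_th)
  have "((\<lambda>t. (\<omega> * m i) ^ 2 * cos t / (m i * sin t ^ 3)) has_real_derivative - (\<omega>^2 * m i)) (at (pi/2))"
    using assms by (auto intro!: derivative_eq_intros simp: power2_eq_square field_simps)
  then show ?thesis unfolding f xb using True by simp
next
  case False
  have f: "(\<lambda>t. ((Xomega n m ph \<omega>)(b:=t)) (3*n+i) ^ 2 * cos (((Xomega n m ph \<omega>)(b:=t)) i)
        / (m i * sin (((Xomega n m ph \<omega>)(b:=t)) i) ^ 3)) = (\<lambda>t. 0)"
    using False assms by (auto simp: X_th)
  show ?thesis unfolding f using False by simp
qed




lemma sdist_sc: "sin (sdist n x i j) = sqrt (1 - cfun n x i j ^ 2)" "cos (sdist n x i j) = cfun n x i j"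
  unfolding sdist_def dot_eq using cfun_bound[of n x i j] by (auto simp: sin_arccos_abs cos_arccos_abs)

lemma F1_sd: "F1 (cfun n x i j) = 1 / sin (sdist n x i j) ^ 3"
  unfolding F1_def sdist_sc ..

theorem lemma1:
  fixes n :: nat and m phi0 :: "nat \<Rightarrow> real" and \<omega> :: real
  assumes "n \<ge> 3"
    and "\<And>i. i < n \<Longrightarrow> m i > 0"
    and "fixed_point n m (config n phi0)"
  shows "(\<forall>a<4*n. \<forall>b<4*n.
            ((\<lambda>t. rot_field n m \<omega> ((Xomega n m phi0 \<omega>)(b := t)) a)
               has_real_derivative Lblock n m phi0 \<omega> a b) (at (Xomega n m phi0 \<omega> b)))
       \<and> (\<forall>i<n. \<forall>j<n. i \<noteq> j \<longrightarrow>
            Hmat n m phi0 i j = m i * m j / sin (sdist n (config n phi0) i j) ^ 3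
          \<and> Gmat n m phi0 i j = - 2 * m i * m j * cos (sdist n (config n phi0) i j)
                                  / sin (sdist n (config n phi0) i j) ^ 3)
       \<and> (\<forall>i<n. Hmat n m phi0 i i =
              - (\<Sum>j\<in>{j. j < n \<and> j \<noteq> i}. Hmat n m phi0 i j * cos (sdist n (config n phi0) i j))
          \<and> Gmat n m phi0 i i = - (\<Sum>j\<in>{j. j < n \<and> j \<noteq> i}. Gmat n m phi0 i j))"
proof -
  let ?X = "Xomega n m phi0 \<omega>" and ?C = "config n phi0"
  have inW: "in_W n ?C" using assms(3) by (simp add: fixed_point_def)
  have WC: "\<forall>(i,j)\<in>PP n. \<bar>cfun n ?C i j\<bar> < 1" by (rule W_of_inW[OF inW])
  have WX: "\<forall>(i,j)\<in>PP n. \<bar>cfun n ?X i j\<bar> < 1" using WC by (auto simp: PP_def cfun_XC)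
  have eqC: "\<forall>l<n. ?C l = pi/2" by (simp add: C_th)
  have eqX: "\<forall>l<n. ?X l = pi/2" by (simp add: X_th)
  have EX: "((\<lambda>t. - partial (Upot n m) k (?X(b:=t))) has_real_derivative Ev n m ?C k b) (at (?X b))"
    if "k < 2*n" for k b
    using E_raw(2)[OF eqX WX, where m=m and k=k and b=b] unfolding E_sum[OF eqX WX that, where m=m and b=b] Ev_XC .
  have HC: "Hmat n m phi0 i j = Ev n m ?C j i" if "i < n" "j < n" for i j
  proof -
    have "j < 2*n" using that by simp
    show ?thesis unfolding Hmat_def partial_def[of "partial (Vpot n m) j"]
      using DERIV_imp_deriv[OF E_raw(1)[OF eqC WC, where m=m and k=j and b=i]] unfolding E_sum[OF eqC WC \<open>j < 2*n\<close>] .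
  qed
  have GC: "Gmat n m phi0 i j = Ev n m ?C (n+j) (n+i)" if "i < n" "j < n" for i j
  proof -
    have "n+j < 2*n" using that by simp
    show ?thesis unfolding Gmat_def partial_def[of "partial (Vpot n m) (n+j)"]
      using DERIV_imp_deriv[OF E_raw(1)[OF eqC WC, where m=m and k="n+j" and b="n+i"]] unfolding E_sum[OF eqC WC \<open>n+j < 2*n\<close>] .
  qed
  have Hoff: "Hmat n m phi0 i j = m i * m j * F1 (cfun n ?C i j)" if "i < n" "j < n" "i \<noteq> j" for i j
    using that by (simp add: HC Ev_def cfun_sym[of n ?C j i])
  have Goff: "Gmat n m phi0 i j = - (2 * m i * m j * cfun n ?C i j * F1 (cfun n ?C i j))" if "i < n" "j < n" "i \<noteq> j" for i j
    using that by (simp add: GC Ev_def cfun_sym[of n ?C j i])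
  have part2: "\<forall>i<n. \<forall>j<n. i \<noteq> j \<longrightarrow>
            Hmat n m phi0 i j = m i * m j / sin (sdist n ?C i j) ^ 3
          \<and> Gmat n m phi0 i j = - 2 * m i * m j * cos (sdist n ?C i j) / sin (sdist n ?C i j) ^ 3"
    by (auto simp: Hoff Goff F1_sd sdist_sc(2))
  have part3: "\<forall>i<n. Hmat n m phi0 i i =
              - (\<Sum>j\<in>{j. j < n \<and> j \<noteq> i}. Hmat n m phi0 i j * cos (sdist n ?C i j))
          \<and> Gmat n m phi0 i i = - (\<Sum>j\<in>{j. j < n \<and> j \<noteq> i}. Gmat n m phi0 i j)"
  proof (intro allI impI conjI)
    fix i assume i: "i < n"
    have "Hmat n m phi0 i i = - (\<Sum>j\<in>{j. j < n \<and> j \<noteq> i}. m i * m j * F1 (cfun n ?C i j) * cfun n ?C i j)"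
      using i by (simp add: HC Ev_def)
    also have "\<dots> = - (\<Sum>j\<in>{j. j < n \<and> j \<noteq> i}. Hmat n m phi0 i j * cos (sdist n ?C i j))"
      using i by (auto simp: Hoff sdist_sc(2) intro!: sum.cong)
    finally show "Hmat n m phi0 i i = - (\<Sum>j\<in>{j. j < n \<and> j \<noteq> i}. Hmat n m phi0 i j * cos (sdist n ?C i j))" .
    have "Gmat n m phi0 i i = (\<Sum>j\<in>{j. j < n \<and> j \<noteq> i}. 2 * m i * m j * cfun n ?C i j * F1 (cfun n ?C i j))"
      using i by (simp add: GC Ev_def)
    also have "\<dots> = - (\<Sum>j\<in>{j. j < n \<and> j \<noteq> i}. Gmat n m phi0 i j)"
      using i by (auto simp: Goff sum_negf[symmetric] intro!: sum.cong)
    finally show "Gmat n m phi0 i i = - (\<Sum>j\<in>{j. j < n \<and> j \<noteq> i}. Gmat n m phi0 i j)" .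
  qed
  have part1: "\<forall>a<4*n. \<forall>b<4*n.
            ((\<lambda>t. rot_field n m \<omega> (?X(b := t)) a) has_real_derivative Lblock n m phi0 \<omega> a b) (at (?X b))"
  proof (intro allI impI)
    fix a b assume a: "a < 4*n" and b: "b < 4*n"
    consider "a < n" | "n \<le> a" "a < 2*n" | "2*n \<le> a" "a < 3*n" | "3*n \<le> a" by linarith
    then show "((\<lambda>t. rot_field n m \<omega> (?X(b := t)) a) has_real_derivative Lblock n m phi0 \<omega> a b) (at (?X b))"
    proof cases
      case 1
      have f: "(\<lambda>t. rot_field n m \<omega> (?X(b := t)) a) = (\<lambda>t. (?X(b:=t)) (2*n+a) / m a)"
        using 1 by (simp add: rot_field_def)
      have L: "Lblock n m phi0 \<omega> a b = (if b = 2*n + a then 1 / m a else 0)" using 1 by (simp add: Lblock_def)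
      show ?thesis unfolding f L by (rule row1[OF 1])
    next
      case 2
      then obtain i where ai: "a = n + i" "i < n" by (metis le_add_diff_inverse less_diff_conv2 mult_2 add.commute)
      have f: "(\<lambda>t. rot_field n m \<omega> (?X(b := t)) a)
          = (\<lambda>t. (?X(b:=t)) (3*n+i) / (m i * sin ((?X(b:=t)) i) ^ 2) - \<omega>)"
        using ai by (simp add: rot_field_def)
      have L: "Lblock n m phi0 \<omega> a b = (if b = 3*n + i then 1 / m i else 0)" using ai by (simp add: Lblock_def)
      show ?thesis unfolding f L by (rule row2[where m=m and n=n and i=i, OF ai(2) assms(2)[OF ai(2)]])
    next
      case 3
      define i where "i = a - 2*n"
      have ai: "a = 2*n + i" "i < n" using 3 unfolding i_def by auto
      have f: "(\<lambda>t. rot_field n m \<omega> (?X(b := t)) a)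
          = (\<lambda>t. (?X(b:=t)) (3*n+i) ^ 2 * cos ((?X(b:=t)) i) / (m i * sin ((?X(b:=t)) i) ^ 3)
                 + - partial (Upot n m) i (?X(b:=t)))"
        using ai by (simp add: rot_field_def)
      have in2: "i < 2*n" using ai by simp
      note D = DERIV_add[OF row3[where b=b and ph=phi0 and \<omega>=\<omega> and m=m and n=n and i=i, OF ai(2) assms(2)[OF ai(2)]] EX[OF in2, where b=b]]
      have L: "Lblock n m phi0 \<omega> a b = (if b = i then - (\<omega>^2 * m i) else 0) + Ev n m ?C i b"
      proof (cases "b < n")
        case True
        then show ?thesis using ai by (auto simp: Lblock_def HC Ev_sym[of n m ?C b i])
      next
        case False
        then show ?thesis using ai by (auto simp: Lblock_def Ev_def)
      qed
      show ?thesis unfolding f L by (rule D)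
    next
      case 4
      define i where "i = a - 3*n"
      have ai: "a = 3*n + i" "i < n" using 4 a unfolding i_def by auto
      have f: "(\<lambda>t. rot_field n m \<omega> (?X(b := t)) a) = (\<lambda>t. - partial (Upot n m) (n+i) (?X(b:=t)))"
        using ai by (simp add: rot_field_def)
      have in2: "n + i < 2*n" using ai by simp
      have L: "Lblock n m phi0 \<omega> a b = Ev n m ?C (n+i) b"
      proof (cases "n \<le> b \<and> b < 2*n")
        case True
        then have "Gmat n m phi0 i (b - n) = Ev n m ?C b (n+i)" using GC[of i "b-n"] ai True by auto
        then show ?thesis using ai True by (simp add: Lblock_def Ev_sym[of n m ?C b])
      next
        case False
        then show ?thesis using ai by (auto simp: Lblock_def Ev_def)
      qed
      show ?thesis unfolding f L by (rule EX[OF in2])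
    qed
  qed
  show ?thesis using part1 part2 part3 by blast
qed

end
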